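(* Let $\mathcal{X}$ be a right coideal of $\mathcal{U}$ (i.e. a subspace with $\Delta(\mathcal{X})\subset\mathcal{X}\otimes\mathcal{U}$) and let $X\in\mathcal{X}$, written in the PBW basis as $X=\sum_{i,\nu,j,k}\alpha_{i,\nu,j,k}F^{(i)}f_\nu E^{(j)}G^{(k)}$ (finitely many nonzero $\alpha_{i,\nu,j,k}\in\mathbb{C}$, $\nu\in\mathbb{C}^\times$, $i,j,k\in\mathbb{N}_0$). For $\mu\in\mathbb{C}^\times$ and $r,s,t\in\mathbb{N}_0$ put $$X_{r,\mu,s,t}:=\sum_{i\ge r,\ j\ge s,\ k\ge t}\alpha_{i,\mu,j,k}\,F^{(i-r)}f_{q^{-r-s}\mu}E^{(j-s)}G^{(k-t)}.$$ Then every $X_{r,\mu,s,t}$ lies in $\mathcal{X}$, and $\mathrm{Lin}\{X_{r,\mu,s,t}: r,s,t\in\mathbb{N}_0,\mu\in\mathbb{C}^\times\}$ is the smallest right coideal of $\mathcal{U}$ containing $X$.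
   Context: Let $q\in\mathbb{C}$ be transcendental (in particular $q\ne0$ and not a root of unity). $\mathcal{U}$ is the unital algebra generated by $E,F,G$ and $f_\mu$ ($\mu\in\mathbb{C}^\times=\mathbb{C}\setminus\{0\}$) with relations $f_\mu f_\nu=f_{\mu\nu}$, $f_\mu E=\mu^2Ef_\mu$, $f_\mu F=\mu^{-2}Ff_\mu$, $f_\mu G=Gf_\mu$, $GE=E(G+2)$, $GF=F(G-2)$, $EF-FE=(f_q-f_{q^{-1}})/(q-q^{-1})$; $f_1=1$. Fix $q^{1/2}$ and put $K=f_{q^{1/2}}$. $\mathcal{U}$ is a Hopf algebra with $\Delta E=E\otimes K+K^{-1}\otimes E$, $\Delta F=F\otimes K+K^{-1}\otimes F$, $\Delta G=1\otimes G+G\otimes1$, $\Delta f_\mu=f_\mu\otimes f_\mu$, $\varepsilon(E)=\varepsilon(F)=\varepsilon(G)=0$, $\varepsilon(f_\mu)=1$. Let $[k]=(q^k-q^{-k})/(q-q^{-1})$, $[k]!=[k]\cdots[1]$, $[0]!=1$, and $F^{(k)}=F^kK^{-k}/[k]!$, $E^{(k)}=K^{-k}E^k/[k]!$, $G^{(k)}=G^k/k!$. The elements $F^{(i)}f_\mu E^{(j)}G^{(k)}$ ($i,j,k\in\mathbb{N}_0$, $\mu\in\mathbb{C}^\times$) form a vector space basis of $\mathcal{U}$ (PBW basis). *)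

theory Defs
  imports Complex_Main "HOL-Computational_Algebra.Polynomial"
begin

text \<open>
  Model of the underlying vector space (and coalgebra) of U via its PBW basis.
  The index (i, nu, j, k) stands for the PBW basis element F^(i) f_nu E^(j) G^(k),
  where nu must be nonzero.  An element of U (x) U is a coefficient
  function on pairs of indices (basis of U (x) U = tensor products of PBW elements).
\<close>

type_synonym pbw_idx = "nat \<times> complex \<times> nat \<times> nat"

definition U_space :: "(pbw_idx \<Rightarrow> complex) set" where
  "U_space = {x. finite {b. x b \<noteq> 0} \<and> (\<forall>i nu j k. x (i, nu, j, k) \<noteq> 0 \<longrightarrow> nu \<noteq> 0)}"

definition pbw :: "nat \<Rightarrow> complex \<Rightarrow> nat \<Rightarrow> nat \<Rightarrow> pbw_idx \<Rightarrow> complex" where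
  "pbw i nu j k = (\<lambda>b. if b = (i, nu, j, k) then 1 else 0)"

text \<open>
  From Delta(F^(n)) = sum_{a+b=n} F^(a) f_{q^-b} (x) F^(b),
  Delta(E^(n)) = sum_{c+d=n} f_{q^-d} E^(c) (x) E^(d), Delta(G^(n)) = sum G^(e) (x) G^(g),
  Delta(f_nu) = f_nu (x) f_nu one gets
  Delta(F^(i) f_nu E^(j) G^(k)) =
    sum_{a+b=i, c+d=j, e+g=k} F^(a) f_{q^(-b-d) nu} E^(c) G^(e) (x) F^(b) f_nu E^(d) G^(g),
  and Delta is extended linearly.
\<close>
definition coprod :: "complex \<Rightarrow> (pbw_idx \<Rightarrow> complex) \<Rightarrow> (pbw_idx \<times> pbw_idx \<Rightarrow> complex)" where
  "coprod q x = (\<lambda>((i1, n1, j1, k1), (i2, n2, j2, k2)).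
      if n1 = inverse q ^ (i2 + j2) * n2 then x (i1 + i2, n2, j1 + j2, k1 + k2) else 0)"

definition subspace_U :: "(pbw_idx \<Rightarrow> complex) set \<Rightarrow> bool" where
  "subspace_U V \<longleftrightarrow> V \<subseteq> U_space \<and> (\<lambda>_. 0) \<in> V
     \<and> (\<forall>x\<in>V. \<forall>y\<in>V. (\<lambda>b. x b + y b) \<in> V)
     \<and> (\<forall>c. \<forall>x\<in>V. (\<lambda>b. c * x b) \<in> V)"

text \<open>Since U has a basis, an element T of U (x) U
  lies in V (x) U iff for each basis element b2 of the second factor the slice
  b1 \<mapsto> T(b1, b2) lies in V.\<close>
definition right_coideal :: "complex \<Rightarrow> (pbw_idx \<Rightarrow> complex) set \<Rightarrow> bool" where
  "right_coideal q V \<longleftrightarrow> subspace_U V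
     \<and> (\<forall>x\<in>V. \<forall>b2. (\<lambda>b1. coprod q x (b1, b2)) \<in> V)"

definition lin_span :: "(pbw_idx \<Rightarrow> complex) set \<Rightarrow> (pbw_idx \<Rightarrow> complex) set" where
  "lin_span S = {x. \<exists>A c. finite A \<and> A \<subseteq> S \<and> x = (\<lambda>b. \<Sum>a\<in>A. c a * a b)}"

definition Xsub :: "complex \<Rightarrow> (pbw_idx \<Rightarrow> complex) \<Rightarrow> nat \<Rightarrow> complex \<Rightarrow> nat \<Rightarrow> nat
    \<Rightarrow> (pbw_idx \<Rightarrow> complex)" where
  "Xsub q X r mu s t = (\<lambda>(i, nu, j, k).
      if nu = inverse q ^ (r + s) * mu then X (i + r, mu, j + s, k + t) else 0)"

end

theory Submission
  imports Defs
begin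

lemma lin_span_zero: "(\<lambda>_. 0) \<in> lin_span S"
  unfolding lin_span_def by (rule CollectI, rule exI[of _ "{}"]) auto

lemma lin_span_add:
  assumes "x \<in> lin_span S" "y \<in> lin_span S"
  shows "(\<lambda>b. x b + y b) \<in> lin_span S"
proof -
  obtain A1 c1 where 1: "finite A1" "A1 \<subseteq> S" "x = (\<lambda>b. \<Sum>a\<in>A1. c1 a * a b)"
    using assms(1) unfolding lin_span_def by blast
  obtain A2 c2 where 2: "finite A2" "A2 \<subseteq> S" "y = (\<lambda>b. \<Sum>a\<in>A2. c2 a * a b)"
    using assms(2) unfolding lin_span_def by blast
  define c where "c a = (if a \<in> A1 then c1 a else 0) + (if a \<in> A2 then c2 a else 0)" for a
  have "(\<lambda>b. x b + y b) = (\<lambda>b. \<Sum>a\<in>A1 \<union> A2. c a * a b)"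
  proof
    fix b
    have "(\<Sum>a\<in>A1 \<union> A2. c a * a b) = (\<Sum>a\<in>A1 \<union> A2. (if a \<in> A1 then c1 a * a b else 0))
        + (\<Sum>a\<in>A1 \<union> A2. (if a \<in> A2 then c2 a * a b else 0))"
      unfolding sum.distrib[symmetric] by (intro sum.cong) (auto simp: c_def distrib_right)
    also have "\<dots> = (\<Sum>a\<in>A1. c1 a * a b) + (\<Sum>a\<in>A2. c2 a * a b)"
    proof -
      have e1: "{a. (a \<in> A1 \<or> a \<in> A2) \<and> a \<in> A1} = A1" by blast
      have e2: "{a. (a \<in> A1 \<or> a \<in> A2) \<and> a \<in> A2} = A2" by blast
      show ?thesis using 1(1) 2(1) by (simp add: sum.inter_filter[symmetric] e1 e2)
    qed
    finally show "x b + y b = (\<Sum>a\<in>A1 \<union> A2. c a * a b)" using 1 2 by simp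
  qed
  then show ?thesis unfolding lin_span_def using 1 2 by blast
qed

lemma lin_span_smult:
  assumes "x \<in> lin_span S"
  shows "(\<lambda>b. d * x b) \<in> lin_span S"
proof -
  obtain A c where 1: "finite A" "A \<subseteq> S" "x = (\<lambda>b. \<Sum>a\<in>A. c a * a b)"
    using assms(1) unfolding lin_span_def by blast
  have "(\<lambda>b. d * x b) = (\<lambda>b. \<Sum>a\<in>A. (d * c a) * a b)"
    unfolding 1(3) by (simp add: sum_distrib_left mult.assoc)
  then show ?thesis unfolding lin_span_def using 1(1,2) by (intro CollectI exI conjI)
qed

lemma sing_sum: "(a::pbw_idx \<Rightarrow> complex) = (\<lambda>b. \<Sum>x\<in>{a}. 1 * x b)" by simp

lemma lin_span_base: "a \<in> S \<Longrightarrow> a \<in> lin_span S"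
  unfolding lin_span_def
  apply (rule CollectI)
  apply (rule exI[of _ "{a}"])
  apply (rule exI[of _ "\<lambda>_. 1"])
  apply (intro conjI)
    apply simp
   apply simp
  apply (rule sing_sum)
  done

lemma lin_span_sum:
  assumes "finite A" "\<forall>a\<in>A. g a \<in> lin_span S"
  shows "(\<lambda>b. \<Sum>a\<in>A. c a * g a b) \<in> lin_span S"
  using assms
proof (induction A rule: finite_induct)
  case empty then show ?case using lin_span_zero by simp
next
  case (insert a F)
  have "(\<lambda>b. c a * g a b + (\<Sum>a\<in>F. c a * g a b)) \<in> lin_span S"
  proof (rule lin_span_add)
    show "(\<lambda>b. c a * g a b) \<in> lin_span S" using insert.prems by (intro lin_span_smult) simp
    show "(\<lambda>b. \<Sum>a\<in>F. c a * g a b) \<in> lin_span S" using insert.prems by (intro insert.IH) simp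
  qed
  then show ?case using insert by simp
qed

lemma sub_add: "subspace_U W \<Longrightarrow> x \<in> W \<Longrightarrow> y \<in> W \<Longrightarrow> (\<lambda>b. x b + y b) \<in> W"
  unfolding subspace_U_def by simp

lemma sub_smult: "subspace_U W \<Longrightarrow> x \<in> W \<Longrightarrow> (\<lambda>b. d * x b) \<in> W"
  unfolding subspace_U_def by simp

lemma sub_zero: "subspace_U W \<Longrightarrow> (\<lambda>_. 0) \<in> W"
  unfolding subspace_U_def by simp

lemma subspace_sum:
  assumes "subspace_U W" "finite A" "\<forall>a\<in>A. a \<in> W"
  shows "(\<lambda>b. \<Sum>a\<in>A. c a * a b) \<in> W"
  using assms(2,3)
proof (induction A rule: finite_induct)
  case empty then show ?case using sub_zero[OF assms(1)] by simp
next
  case (insert a F)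
  have "(\<lambda>b. c a * a b + (\<Sum>a\<in>F. c a * a b)) \<in> W"
  proof -
    have 1: "(\<lambda>b. c a * a b) \<in> W" using insert.prems by (intro sub_smult[OF assms(1)]) simp
    have 2: "(\<lambda>b. \<Sum>a\<in>F. c a * a b) \<in> W" using insert.prems by (intro insert.IH) simp
    show ?thesis using 1 2 by (rule sub_add[OF assms(1)])
  qed
  then show ?case using insert by simp
qed

lemma lin_span_sub:
  assumes "subspace_U W" "S \<subseteq> W" shows "lin_span S \<subseteq> W"
proof
  fix x assume "x \<in> lin_span S"
  then obtain A c where A: "finite A" "A \<subseteq> S" "x = (\<lambda>b. \<Sum>a\<in>A. c a * a b)"
    unfolding lin_span_def by blast
  have "(\<lambda>b. \<Sum>a\<in>A. c a * a b) \<in> W" using A(1,2) assms by (intro subspace_sum) auto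
  then show "x \<in> W" unfolding A(3) .
qed

lemma slice_eq: "(\<lambda>b1. coprod q x (b1, (i2, n2, j2, k2))) = Xsub q x i2 n2 j2 k2"
  unfolding coprod_def Xsub_def by (auto simp: power_add)

lemma Xsub_in:
  assumes "right_coideal q V" "X \<in> V"
  shows "Xsub q X r mu s t \<in> V"
  using assms slice_eq[of q X r mu s t] unfolding right_coideal_def by metis

lemma slice_Xsub:
  "(\<lambda>b1. coprod q (Xsub q X r mu s t) (b1, (i2, n2, j2, k2))) =
    (if n2 = inverse q ^ (r + s) * mu then Xsub q X (r + i2) mu (s + j2) (t + k2) else (\<lambda>_. 0))"
  unfolding coprod_def Xsub_def
  by (auto simp: power_add algebra_simps fun_eq_iff)

theorem proposition4p1:
  fixes q :: complex and V :: "(pbw_idx \<Rightarrow> complex) set" and X :: "pbw_idx \<Rightarrow> complex"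
  assumes "\<not> algebraic q"
    and "right_coideal q V"
    and "X \<in> V"
  shows "(\<forall>r mu s t. mu \<noteq> 0 \<longrightarrow> Xsub q X r mu s t \<in> V)
    \<and> right_coideal q (lin_span {Xsub q X r mu s t | r mu s t. mu \<noteq> 0})
    \<and> X \<in> lin_span {Xsub q X r mu s t | r mu s t. mu \<noteq> 0}
    \<and> (\<forall>W. right_coideal q W \<and> X \<in> W
          \<longrightarrow> lin_span {Xsub q X r mu s t | r mu s t. mu \<noteq> 0} \<subseteq> W)"
proof -
  let ?S = "{Xsub q X r mu s t | r mu s t. mu \<noteq> 0}"
  have P1: "\<forall>r mu s t. mu \<noteq> 0 \<longrightarrow> Xsub q X r mu s t \<in> V"
    using Xsub_in assms by blast
  have P4: "\<forall>W. right_coideal q W \<and> X \<in> W \<longrightarrow> lin_span ?S \<subseteq> W"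
  proof (intro allI impI)
    fix W assume W: "right_coideal q W \<and> X \<in> W"
    then have "?S \<subseteq> W" using Xsub_in by blast
    moreover have sW: "subspace_U W" using W unfolding right_coideal_def by simp
    ultimately show "lin_span ?S \<subseteq> W" using lin_span_sub by blast
  qed
  have sV: "subspace_U V" using assms(2) unfolding right_coideal_def by simp
  have SsV: "?S \<subseteq> V" using P1 by blast
  have SV: "lin_span ?S \<subseteq> V" by (rule lin_span_sub[OF sV SsV])
  have VU: "V \<subseteq> U_space" using sV unfolding subspace_U_def by simp
  have sub: "subspace_U (lin_span ?S)"
    unfolding subspace_U_def
  proof (intro conjI ballI allI)
    show "lin_span ?S \<subseteq> U_space" using SV VU by (rule order_trans)
    show "(\<lambda>_. 0) \<in> lin_span ?S" by (rule lin_span_zero)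
    show "(\<lambda>b. x b + y b) \<in> lin_span ?S" if "x \<in> lin_span ?S" "y \<in> lin_span ?S" for x y
      using that by (rule lin_span_add)
    show "(\<lambda>b. c * x b) \<in> lin_span ?S" if "x \<in> lin_span ?S" for x c
      using that by (rule lin_span_smult)
  qed
  have cond: "\<forall>x\<in>lin_span ?S. \<forall>b2. (\<lambda>b1. coprod q x (b1, b2)) \<in> lin_span ?S"
  proof (intro ballI allI)
    fix x and b2 :: pbw_idx assume "x \<in> lin_span ?S"
    then obtain A c where A: "finite A" "A \<subseteq> ?S" "x = (\<lambda>b. \<Sum>a\<in>A. c a * a b)"
      unfolding lin_span_def by blast
    obtain i2 n2 j2 k2 where b2: "b2 = (i2, n2, j2, k2)" by (cases b2) auto
    have eq: "(\<lambda>b1. coprod q x (b1, b2)) =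
        (\<lambda>b1. \<Sum>a\<in>A. c a * (\<lambda>a b1. coprod q a (b1, b2)) a b1)"
    proof (rule ext)
      fix b1 :: pbw_idx
      obtain i1 n1 j1 k1 where b1: "b1 = (i1, n1, j1, k1)" by (cases b1) auto
      show "coprod q x (b1, b2) = (\<Sum>a\<in>A. c a * (\<lambda>a b1. coprod q a (b1, b2)) a b1)"
        unfolding b1 b2 coprod_def A(3) by simp
    qed
    have "\<forall>a\<in>A. (\<lambda>b1. coprod q a (b1, b2)) \<in> lin_span ?S"
    proof
      fix a assume "a \<in> A"
      then obtain r mu s t where a: "a = Xsub q X r mu s t" "mu \<noteq> 0" using A(2) by blast
      show "(\<lambda>b1. coprod q a (b1, b2)) \<in> lin_span ?S"
        unfolding a b2 slice_Xsub using a(2) lin_span_zero lin_span_base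
        by (auto intro!: lin_span_base)
    qed
    then show "(\<lambda>b1. coprod q x (b1, b2)) \<in> lin_span ?S"
      unfolding eq by (rule lin_span_sum[OF A(1)])
  qed
  have P2: "right_coideal q (lin_span ?S)"
    unfolding right_coideal_def using sub cond by (intro conjI)
  have P3: "X \<in> lin_span ?S"
  proof -
    have XU: "X \<in> U_space" using assms(2,3) unfolding right_coideal_def subspace_U_def by blast
    define M where "M = (\<lambda>(i, nu, j, k). nu) ` {b. X b \<noteq> 0}"
    have fM: "finite M" using XU unfolding U_space_def M_def by auto
    have M0: "0 \<notin> M" using XU unfolding U_space_def M_def by auto
    have "X = (\<lambda>b. \<Sum>mu\<in>M. 1 * Xsub q X 0 mu 0 0 b)"
    proof
      fix b :: pbw_idx
      obtain i nu j k where b: "b = (i, nu, j, k)" by (cases b) auto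
      show "X b = (\<Sum>mu\<in>M. 1 * Xsub q X 0 mu 0 0 b)"
      proof (cases "nu \<in> M")
        case True
        then have "(\<Sum>mu\<in>M. 1 * Xsub q X 0 mu 0 0 b) = Xsub q X 0 nu 0 0 b"
          using fM by (subst sum.remove[of _ nu]) (auto simp: b Xsub_def)
        then show ?thesis by (simp add: b Xsub_def)
      next
        case False
        then have "X b = 0" unfolding M_def b by force
        moreover have "(\<Sum>mu\<in>M. 1 * Xsub q X 0 mu 0 0 b) = 0"
          using False by (intro sum.neutral) (auto simp: b Xsub_def)
        ultimately show ?thesis by simp
      qed
    qed
    moreover have "(\<lambda>b. \<Sum>mu\<in>M. 1 * Xsub q X 0 mu 0 0 b) \<in> lin_span ?S"
    proof -
      have "\<forall>mu\<in>M. Xsub q X 0 mu 0 0 \<in> lin_span ?S"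
        using M0 by (auto intro!: lin_span_base)
      then show ?thesis using lin_span_sum[OF fM, of "\<lambda>mu. Xsub q X 0 mu 0 0" _ "\<lambda>_. 1"] by simp
    qed
    ultimately show ?thesis by simp
  qed
  show ?thesis using P1 P2 P3 P4 by blast
qed

end
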